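(* Fix $S\in\mathbb{R}^{K_0\times K_1}$, $\gamma_{(0)}$ and $\theta=(\theta^{(1)},\dots,\theta^{(N)})$ with $\theta^{(n)}\in\mathbb{P}_L^{K_n\times K_{n+1}}$ having all entries positive. For $n=1,\dots,N$ define $A_{(n)}\in\mathbb{R}^{K_{n+1}\times K_n}$ by $\{A_{(n)}\}_{k_{n+1},k_n}=-\delta_n\log\theta^{(n)}_{k_n,k_{n+1}}$, and set $A_{(N+1)}:=0$. If $\min\{\epsilon_n: n=1,\dots,N+1\}>\max\{\|A_{(n)}\|_2+\|A_{(n+1)}\|_2: n=1,\dots,N\}$, then the EON objective $L$, viewed as a function of $(\gamma_{(1)},\dots,\gamma_{(N+1)})\in\mathbb{P}_L^{K_1\times T}\times\dots\times\mathbb{P}_L^{K_{N+1}\times T}$, is strictly convex, and consequently its minimizer $\hat\Gamma$ is unique.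
   Context: $\mathbb{P}^K$ is the probability simplex; $\mathbb{P}_L^{a\times b}$ are $a\times b$ matrices with all columns in $\mathbb{P}^a$. $\|\cdot\|_2$ is the spectral norm. Data $X(1),\dots,X(T)\in\mathbb{R}^{K_0}$, $\gamma_{(0)}\in\mathbb{R}^{K_0\times T}$ nonnegative, $\delta_n>0$, $\epsilon_n>0$. Natural logarithms with $0\log0=0$. The EON objective is $L=\sum_{t=1}^T\Big(\sum_{k_1}\{\gamma_{(1)}\}_{k_1,t}\sum_{d}\{\gamma_{(0)}\}_{d,t}(\{X(t)\}_d-S_{d,k_1})^2-\sum_{n=1}^N\delta_n\sum_{k_n,k_{n+1}}\{\gamma_{(n)}\}_{k_n,t}\{\gamma_{(n+1)}\}_{k_{n+1},t}\log\theta^{(n)}_{k_n,k_{n+1}}+\sum_{n=0}^{N+1}\epsilon_n\sum_{k_n}\{\gamma_{(n)}\}_{k_n,t}\log\{\gamma_{(n)}\}_{k_n,t}\Big)$. *)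

theory Defs
  imports Complex_Main
begin

text \<open>Matrices are functions nat => nat => real indexed from 0.
  K n is the size K_n (n = 0..N+1). Data: X t d = {X(t)}_d, g0 d t = {gamma_(0)}_{d,t},
  S d k = S_{d,k}, th n k k' = theta^(n)_{k,k'}.  The optimisation variable
  G n k t = {gamma_(n)}_{k,t} for n = 1..N+1 (zero outside the index ranges).\<close>

definition xlogx :: "real \<Rightarrow> real" where
  "xlogx x = (if x = 0 then 0 else x * ln x)"

definition gam :: "(nat \<Rightarrow> nat \<Rightarrow> real) \<Rightarrow> (nat \<Rightarrow> nat \<Rightarrow> nat \<Rightarrow> real) \<Rightarrow> nat \<Rightarrow> nat \<Rightarrow> nat \<Rightarrow> real" where
  "gam g0 G n = (if n = 0 then g0 else G n)"

definition EON_L ::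
  "nat \<Rightarrow> (nat \<Rightarrow> nat) \<Rightarrow> nat \<Rightarrow> (nat \<Rightarrow> nat \<Rightarrow> real) \<Rightarrow> (nat \<Rightarrow> nat \<Rightarrow> real)
   \<Rightarrow> (nat \<Rightarrow> nat \<Rightarrow> real) \<Rightarrow> (nat \<Rightarrow> nat \<Rightarrow> nat \<Rightarrow> real) \<Rightarrow> (nat \<Rightarrow> real) \<Rightarrow> (nat \<Rightarrow> real)
   \<Rightarrow> (nat \<Rightarrow> nat \<Rightarrow> nat \<Rightarrow> real) \<Rightarrow> real" where
  "EON_L N K T X g0 S th \<delta> \<epsilon> G =
    (\<Sum>t<T.
       (\<Sum>k1<K 1. gam g0 G 1 k1 t * (\<Sum>d<K 0. g0 d t * (X t d - S d k1)\<^sup>2))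
     - (\<Sum>n\<in>{1..N}. \<delta> n * (\<Sum>kn<K n. \<Sum>kn1<K (Suc n).
            gam g0 G n kn t * gam g0 G (Suc n) kn1 t * ln (th n kn kn1)))
     + (\<Sum>n\<in>{0..N+1}. \<epsilon> n * (\<Sum>kn<K n. xlogx (gam g0 G n kn t))))"

definition EON_domain :: "nat \<Rightarrow> (nat \<Rightarrow> nat) \<Rightarrow> nat \<Rightarrow> (nat \<Rightarrow> nat \<Rightarrow> nat \<Rightarrow> real) set" where
  "EON_domain N K T = {G.
     (\<forall>n\<in>{1..N+1}. \<forall>t<T. (\<forall>k<K n. 0 \<le> G n k t) \<and> (\<Sum>k<K n. G n k t) = 1) \<and>
     (\<forall>n k t. (n \<notin> {1..N+1} \<or> K n \<le> k \<or> T \<le> t) \<longrightarrow> G n k t = 0)}"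

definition spec_norm :: "nat \<Rightarrow> nat \<Rightarrow> (nat \<Rightarrow> nat \<Rightarrow> real) \<Rightarrow> real" where
  "spec_norm m p A = Sup {sqrt (\<Sum>i<m. (\<Sum>j<p. A i j * x j)\<^sup>2) | x. (\<Sum>j<p. (x j)\<^sup>2) \<le> 1}"

definition Amat :: "nat \<Rightarrow> (nat \<Rightarrow> nat \<Rightarrow> nat \<Rightarrow> real) \<Rightarrow> (nat \<Rightarrow> real) \<Rightarrow> nat \<Rightarrow> nat \<Rightarrow> nat \<Rightarrow> real" where
  "Amat N th \<delta> n = (\<lambda>i j. if n \<in> {1..N} then - \<delta> n * ln (th n j i) else 0)"

definition strictly_convex_on_set :: "(nat \<Rightarrow> nat \<Rightarrow> nat \<Rightarrow> real) set \<Rightarrow> ((nat \<Rightarrow> nat \<Rightarrow> nat \<Rightarrow> real) \<Rightarrow> real) \<Rightarrow> bool" where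
  "strictly_convex_on_set D f \<longleftrightarrow>
     (\<forall>x\<in>D. \<forall>y\<in>D. \<forall>u::real. x \<noteq> y \<and> 0 < u \<and> u < 1 \<longrightarrow>
        f (\<lambda>n k t. u * x n k t + (1 - u) * y n k t) < u * f x + (1 - u) * f y)"

end

theory Submission
  imports Defs "HOL-Analysis.Analysis" "HOL-Real_Asymp.Real_Asymp"
begin


lemma xlogx_eq: "xlogx x = x * ln x"
  by (simp add: xlogx_def)

lemma ln_diff_ge: fixes m x :: real assumes "0 < m" "m \<le> x" "x \<le> 1" shows "x - m \<le> ln x - ln m"
proof -
  have x0: "0 < x" using assms by linarith
  have "ln (m / x) \<le> m / x - 1" using ln_le_minus_one[of "m/x"] assms x0 by simp
  hence "ln m - ln x \<le> m / x - 1" using assms x0 by (simp add: ln_div)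
  moreover have "(x - m) / x = 1 - m / x" using x0 by (simp add: field_simps)
  moreover have "(x - m) \<le> (x - m) / x"
    using assms x0 by (simp add: le_divide_eq mult_left_le)
  ultimately show ?thesis by linarith
qed

lemma ln_diff_le: fixes m x :: real assumes "0 < x" "x \<le> m" "m \<le> 1" shows "ln x - ln m \<le> x - m"
proof -
  have m0: "0 < m" using assms by linarith
  have "ln (x / m) \<le> x / m - 1" using ln_le_minus_one[of "x/m"] assms m0 by simp
  hence "ln x - ln m \<le> (x - m) / m" using assms m0 by (simp add: ln_div diff_divide_distrib)
  moreover have "(x - m) / m \<le> (x - m)"
    using assms m0 by (simp add: divide_le_eq mult_left_le_one_le mult_le_cancel_left1)
  ultimately show ?thesis by linarith
qed

lemma xlogx_tangent:
  fixes m a :: real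
  assumes "0 < m" "m \<le> 1" "0 \<le> a" "a \<le> 1"
  shows "xlogx m + (ln m + 1) * (a - m) + (a - m)\<^sup>2 / 2 \<le> xlogx a"
proof (cases "a = 0")
  case True
  have "m * ln m + (ln m + 1) * (0 - m) + (0 - m)\<^sup>2 / 2 = m * (m / 2 - 1)"
    by (simp add: algebra_simps power2_eq_square)
  also have "\<dots> \<le> 0" using assms by (simp add: mult_nonneg_nonpos)
  finally show ?thesis using True by (simp add: xlogx_def)
next
  case False
  hence a0: "0 < a" using assms by simp
  define h where "h = (\<lambda>x. x * ln x - (ln m + 1) * (x - m) - (x - m)\<^sup>2 / 2)"
  have hd: "(h has_real_derivative (ln x + 1 - (ln m + 1) - (x - m))) (at x)" if "0 < x" for x
    unfolding h_def using that
    by (auto intro!: derivative_eq_intros simp: power2_eq_square) (simp add: field_simps)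
  have "h m \<le> h a"
  proof (cases "m \<le> a")
    case True
    show ?thesis
    proof (rule deriv_nonneg_imp_mono[OF _ _ True])
      fix x assume x: "x \<in> {m..a}"
      show "(h has_real_derivative (ln x + 1 - (ln m + 1) - (x - m))) (at x)"
        using hd x assms by auto
      show "0 \<le> ln x + 1 - (ln m + 1) - (x - m)" using ln_diff_ge[of m x] x assms by auto
    qed
  next
    case False
    have "(\<lambda>x. - h x) a \<le> (\<lambda>x. - h x) m"
    proof (rule deriv_nonneg_imp_mono[of a m "\<lambda>x. - h x" "\<lambda>x. -(ln x + 1 - (ln m + 1) - (x - m))"])
      fix x assume x: "x \<in> {a..m}"
      show "((\<lambda>x. - h x) has_real_derivative - (ln x + 1 - (ln m + 1) - (x - m))) (at x)"
        using hd[of x] x a0 by (auto intro!: derivative_eq_intros)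
      show "0 \<le> - (ln x + 1 - (ln m + 1) - (x - m))" using ln_diff_le[of x m] x a0 assms by auto
    qed (use False in auto)
    thus ?thesis by simp
  qed
  thus ?thesis using a0 assms by (simp add: h_def xlogx_def)
qed

lemma xlogx_gap:
  fixes a b u :: real
  assumes "0 \<le> a" "a \<le> 1" "0 \<le> b" "b \<le> 1" "0 < u" "u < 1"
  shows "u * (1 - u) * (a - b)\<^sup>2 / 2 \<le> u * xlogx a + (1 - u) * xlogx b - xlogx (u * a + (1 - u) * b)"
proof -
  define m where "m = u * a + (1 - u) * b"
  have m0: "0 \<le> m" using assms by (simp add: m_def)
  have m1: "m \<le> 1"
  proof -
    have "u * a \<le> u" "(1 - u) * b \<le> 1 - u" using assms by (simp_all add: mult_left_le)
    thus ?thesis by (simp add: m_def)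
  qed
  show ?thesis
  proof (cases "m = 0")
    case True
    have "u * a = 0" "(1-u) * b = 0" using True assms unfolding m_def
      by (smt (verit) mult_nonneg_nonneg)+
    hence "a = 0" "b = 0" using assms by auto
    thus ?thesis by (simp add: xlogx_def)
  next
    case False
    hence mp: "0 < m" using m0 by simp
    have ta: "xlogx m + (ln m + 1) * (a - m) + (a - m)\<^sup>2 / 2 \<le> xlogx a"
      using xlogx_tangent[OF mp m1 assms(1,2)] .
    have tb: "xlogx m + (ln m + 1) * (b - m) + (b - m)\<^sup>2 / 2 \<le> xlogx b"
      using xlogx_tangent[OF mp m1 assms(3,4)] .
    have e1: "a - m = (1 - u) * (a - b)" "b - m = - u * (a - b)"
      by (simp_all add: m_def algebra_simps)
    have comb: "u * (xlogx m + (ln m + 1) * (a - m) + (a - m)\<^sup>2 / 2)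
       + (1 - u) * (xlogx m + (ln m + 1) * (b - m) + (b - m)\<^sup>2 / 2)
       = xlogx m + u * (1 - u) * (a - b)\<^sup>2 / 2"
      unfolding e1 by (simp add: power2_eq_square field_simps)
    have "u * (xlogx m + (ln m + 1) * (a - m) + (a - m)\<^sup>2 / 2) \<le> u * xlogx a"
      using ta assms by (simp add: mult_left_mono)
    moreover have "(1 - u) * (xlogx m + (ln m + 1) * (b - m) + (b - m)\<^sup>2 / 2) \<le> (1 - u) * xlogx b"
      using tb assms by (simp add: mult_left_mono)
    ultimately show ?thesis using comb by (simp add: m_def)
  qed
qed



lemma xlogx_cont: "continuous_on {0..} xlogx"
proof -
  have lim: "((\<lambda>x::real. x * ln x) \<longlongrightarrow> 0) (at_right 0)" by real_asymp
  have "continuous (at x within {0..}) xlogx" if "x \<in> {0..}" for x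
  proof (cases "x = 0")
    case True
    show ?thesis unfolding True continuous_within at_within_Ici_at_right
      using lim by (simp add: xlogx_eq[abs_def] xlogx_def)
  next
    case False
    hence "0 < x" using that by auto
    hence "isCont (\<lambda>x. x * ln x) x" by (auto intro!: continuous_intros)
    thus ?thesis by (simp add: xlogx_eq[abs_def] continuous_at_imp_continuous_at_within)
  qed
  thus ?thesis using continuous_on_eq_continuous_within by blast
qed

lemma compact_PiE_UNIV:
  fixes S :: "'a \<Rightarrow> 'b::topological_space set"
  assumes "\<And>i. compact (S i)"
  shows "compact (PiE UNIV S)"
proof -
  have "compactin (product_topology (\<lambda>i. euclidean) UNIV) (PiE UNIV S)"
    using assms by (simp add: compactin_PiE)
  thus ?thesis by (simp add: euclidean_product_topology)
qed

lemma eval3_cont: "continuous_on D (\<lambda>G::nat \<Rightarrow> nat \<Rightarrow> nat \<Rightarrow> real. G n k t)"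
proof -
  have "continuous_on D (\<lambda>G::nat \<Rightarrow> nat \<Rightarrow> nat \<Rightarrow> real. G)" by (rule continuous_on_id)
  hence "continuous_on D (\<lambda>G::nat \<Rightarrow> nat \<Rightarrow> nat \<Rightarrow> real. G n)"
    by (rule continuous_on_product_then_coordinatewise)
  hence "continuous_on D (\<lambda>G::nat \<Rightarrow> nat \<Rightarrow> nat \<Rightarrow> real. G n k)"
    by (rule continuous_on_product_then_coordinatewise)
  thus ?thesis by (rule continuous_on_product_then_coordinatewise)
qed

lemma box_compact: "compact {G::nat \<Rightarrow> nat \<Rightarrow> nat \<Rightarrow> real. \<forall>n k t. G n k t \<in> {0..1}}"
proof -
  have "{G::nat \<Rightarrow> nat \<Rightarrow> nat \<Rightarrow> real. \<forall>n k t. G n k t \<in> {0..1}}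
      = PiE UNIV (\<lambda>_. PiE UNIV (\<lambda>_. PiE UNIV (\<lambda>_. {0..1::real})))"
    by (auto simp: PiE_def Pi_def)
  moreover have "compact (PiE UNIV (\<lambda>_::nat. PiE UNIV (\<lambda>_::nat. PiE UNIV (\<lambda>_::nat. {0..1::real}))))"
    by (intro compact_PiE_UNIV compact_Icc)
  ultimately show ?thesis by simp
qed



lemma spec_set_bdd:
  "bdd_above {sqrt (\<Sum>i<m. (\<Sum>j<p. A i j * x j)\<^sup>2) | x. (\<Sum>j<p. (x j)\<^sup>2) \<le> (1::real)}"
proof (rule bdd_aboveI)
  fix r assume "r \<in> {sqrt (\<Sum>i<m. (\<Sum>j<p. A i j * x j)\<^sup>2) | x. (\<Sum>j<p. (x j)\<^sup>2) \<le> (1::real)}"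
  then obtain x where r: "r = sqrt (\<Sum>i<m. (\<Sum>j<p. A i j * x j)\<^sup>2)" and x: "(\<Sum>j<p. (x j)\<^sup>2) \<le> 1" by auto
  have "(\<Sum>j<p. A i j * x j)\<^sup>2 \<le> (\<Sum>j<p. (A i j)\<^sup>2)" for i
  proof -
    have "(\<Sum>j<p. A i j * x j)\<^sup>2 \<le> (\<Sum>j<p. (A i j)\<^sup>2) * (\<Sum>j<p. (x j)\<^sup>2)"
      by (rule Cauchy_Schwarz_ineq_sum)
    also have "\<dots> \<le> (\<Sum>j<p. (A i j)\<^sup>2) * 1"
      using x by (intro mult_left_mono) (auto intro: sum_nonneg)
    finally show ?thesis by simp
  qed
  hence "(\<Sum>i<m. (\<Sum>j<p. A i j * x j)\<^sup>2) \<le> (\<Sum>i<m. \<Sum>j<p. (A i j)\<^sup>2)"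
    by (intro sum_mono)
  thus "r \<le> sqrt (\<Sum>i<m. \<Sum>j<p. (A i j)\<^sup>2)" unfolding r by (rule real_sqrt_le_mono)
qed

lemma spec_norm_nonneg: "0 \<le> spec_norm m p A"
proof -
  have "0 \<in> {sqrt (\<Sum>i<m. (\<Sum>j<p. A i j * x j)\<^sup>2) | x. (\<Sum>j<p. (x j)\<^sup>2) \<le> (1::real)}"
    by (rule CollectI, rule exI[of _ "\<lambda>_. 0"]) simp
  thus ?thesis unfolding spec_norm_def using spec_set_bdd by (rule cSup_upper)
qed

lemma spec_norm_bound:
  "(\<Sum>i<m. (\<Sum>j<p. A i j * v j)\<^sup>2) \<le> (spec_norm m p A)\<^sup>2 * (\<Sum>j<p. (v j)\<^sup>2)"
proof (cases "(\<Sum>j<p. (v j)\<^sup>2) = 0")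
  case True
  hence "\<forall>j\<in>{..<p}. (v j)\<^sup>2 = 0" by (subst sum_nonneg_eq_0_iff[symmetric]) auto
  hence "\<forall>j<p. v j = 0" by auto
  hence "(\<Sum>i<m. (\<Sum>j<p. A i j * v j)\<^sup>2) = 0" by simp
  thus ?thesis using True by simp
next
  case False
  define s where "s = (\<Sum>j<p. (v j)\<^sup>2)"
  have s0: "0 < s" using False unfolding s_def by (metis less_eq_real_def sum_nonneg zero_le_power2)
  define x where "x = (\<lambda>j. v j / sqrt s)"
  have "(\<Sum>j<p. (x j)\<^sup>2) = (\<Sum>j<p. (v j)\<^sup>2) / s"
    unfolding x_def using s0 by (simp add: power_divide sum_divide_distrib)
  hence x1: "(\<Sum>j<p. (x j)\<^sup>2) \<le> 1" using s0 by (simp add: s_def)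
  have "sqrt (\<Sum>i<m. (\<Sum>j<p. A i j * x j)\<^sup>2) \<le> spec_norm m p A"
    unfolding spec_norm_def using x1 by (intro cSup_upper spec_set_bdd) auto
  moreover have "(\<Sum>i<m. (\<Sum>j<p. A i j * x j)\<^sup>2) = (\<Sum>i<m. (\<Sum>j<p. A i j * v j)\<^sup>2) / s"
  proof -
    have "(\<Sum>j<p. A i j * x j) = (\<Sum>j<p. A i j * v j) / sqrt s" for i
      unfolding x_def by (simp add: sum_divide_distrib)
    hence "(\<Sum>i<m. (\<Sum>j<p. A i j * x j)\<^sup>2) = (\<Sum>i<m. (\<Sum>j<p. A i j * v j)\<^sup>2 / s)"
      using s0 by (simp add: power_divide)
    thus ?thesis by (simp add: sum_divide_distrib)
  qed
  ultimately have sq: "sqrt ((\<Sum>i<m. (\<Sum>j<p. A i j * v j)\<^sup>2) / s) \<le> spec_norm m p A" by simp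
  hence "((\<Sum>i<m. (\<Sum>j<p. A i j * v j)\<^sup>2) / s) \<le> (spec_norm m p A)\<^sup>2"
  proof -
    define y where "y = (\<Sum>i<m. (\<Sum>j<p. A i j * v j)\<^sup>2) / s"
    have y0: "0 \<le> y" unfolding y_def using s0 by (intro divide_nonneg_pos sum_nonneg) auto
    have "sqrt y \<le> spec_norm m p A" using sq unfolding y_def .
    hence "(sqrt y)\<^sup>2 \<le> (spec_norm m p A)\<^sup>2" using y0 by (intro power_mono) auto
    thus "y \<le> (spec_norm m p A)\<^sup>2" using y0 by simp
  qed
  thus ?thesis using s0 by (simp add: divide_le_eq s_def)
qed

lemma bil_bound:
  fixes d e :: "nat \<Rightarrow> real"
  shows "- (spec_norm q p A * ((\<Sum>k<p. (d k)\<^sup>2) + (\<Sum>k<q. (e k)\<^sup>2)) / 2)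
     \<le> (\<Sum>k<p. \<Sum>k'<q. d k * e k' * A k' k)"
proof -
  define a where "a = spec_norm q p A"
  define Sd where "Sd = (\<Sum>k<p. (d k)\<^sup>2)"
  define Se where "Se = (\<Sum>k<q. (e k)\<^sup>2)"
  define w where "w = (\<lambda>k'. \<Sum>k<p. A k' k * d k)"
  define B where "B = (\<Sum>k<p. \<Sum>k'<q. d k * e k' * A k' k)"
  have a0: "0 \<le> a" unfolding a_def by (rule spec_norm_nonneg)
  have Sd0: "0 \<le> Sd" unfolding Sd_def by (rule sum_nonneg) simp
  have Se0: "0 \<le> Se" unfolding Se_def by (rule sum_nonneg) simp
  have "B = (\<Sum>k'<q. \<Sum>k<p. d k * e k' * A k' k)" unfolding B_def by (rule sum.swap)
  also have "\<dots> = (\<Sum>k'<q. e k' * w k')" unfolding w_def sum_distrib_left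
    by (intro sum.cong refl) (simp add: mult_ac)
  finally have Beq: "B = (\<Sum>k'<q. e k' * w k')" .
  have w2: "(\<Sum>k'<q. (w k')\<^sup>2) \<le> a\<^sup>2 * Sd"
    unfolding w_def a_def Sd_def by (rule spec_norm_bound)
  have "B\<^sup>2 \<le> Se * (\<Sum>k'<q. (w k')\<^sup>2)"
    unfolding Beq Se_def by (rule Cauchy_Schwarz_ineq_sum)
  also have "\<dots> \<le> Se * (a\<^sup>2 * Sd)"
    using w2 Se0 by (rule mult_left_mono)
  also have "\<dots> = (a * sqrt Sd * sqrt Se)\<^sup>2" using Sd0 Se0 by (simp add: power_mult_distrib)
  finally have "\<bar>B\<bar>\<^sup>2 \<le> (a * sqrt Sd * sqrt Se)\<^sup>2" by simp
  hence absB: "\<bar>B\<bar> \<le> a * sqrt Sd * sqrt Se"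
    by (rule power2_le_imp_le) (intro mult_nonneg_nonneg a0 real_sqrt_ge_zero Sd0 Se0)
  have "sqrt Sd * sqrt Se \<le> (Sd + Se) / 2"
  proof -
    have "0 \<le> (sqrt Sd - sqrt Se)\<^sup>2" by simp
    thus ?thesis using Sd0 Se0 by (simp add: power2_diff)
  qed
  hence "a * (sqrt Sd * sqrt Se) \<le> a * ((Sd + Se) / 2)" using a0 by (rule mult_left_mono)
  hence "- (a * (Sd + Se) / 2) \<le> B" using absB by (simp add: mult.assoc)
  thus ?thesis unfolding a_def Sd_def Se_def B_def .
qed



lemma gap_sum:
  fixes u :: real
  shows "u * sum f A + (1 - u) * sum g A - sum h A = (\<Sum>i\<in>A. u * f i + (1 - u) * g i - h i)"
  by (simp add: sum_distrib_left sum_subtractf sum.distrib)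

lemma dom_bounds:
  assumes "G \<in> EON_domain N K T"
  shows "0 \<le> G n k t \<and> G n k t \<le> 1"
proof (cases "n \<in> {1..N+1} \<and> k < K n \<and> t < T")
  case True
  hence nn: "\<forall>k<K n. 0 \<le> G n k t" and s1: "(\<Sum>k<K n. G n k t) = 1"
    using assms unfolding EON_domain_def by auto
  have "G n k t \<le> (\<Sum>k<K n. G n k t)"
    by (rule member_le_sum) (use True nn in auto)
  thus ?thesis using s1 nn True by auto
next
  case False
  hence "G n k t = 0" using assms unfolding EON_domain_def by auto
  thus ?thesis by simp
qed

lemma dom_convex:
  assumes "x \<in> EON_domain N K T" "y \<in> EON_domain N K T" "0 \<le> u" "u \<le> (1::real)"
  shows "(\<lambda>n k t. u * x n k t + (1 - u) * y n k t) \<in> EON_domain N K T"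
proof -
  have "(\<Sum>k<K n. u * x n k t + (1 - u) * y n k t) = 1" if "n \<in> {1..N+1}" "t < T" for n t
  proof -
    have "(\<Sum>k<K n. x n k t) = 1" "(\<Sum>k<K n. y n k t) = 1"
      using assms that unfolding EON_domain_def by auto
    thus ?thesis by (simp add: sum.distrib sum_distrib_left[symmetric])
  qed
  moreover have "0 \<le> u * x n k t + (1 - u) * y n k t" for n k t
    using dom_bounds[OF assms(1), of n k t] dom_bounds[OF assms(2), of n k t] assms(3,4)
    by simp
  moreover have "x n k t = 0 \<and> y n k t = 0" if "n \<notin> {1..N+1} \<or> K n \<le> k \<or> T \<le> t" for n k t
    using assms that unfolding EON_domain_def by auto
  ultimately show ?thesis unfolding EON_domain_def by auto
qed

lemma bil_gap:
  fixes u :: real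
  shows "u * (\<Sum>k\<in>A. \<Sum>k'\<in>B. a1 k * b1 k' * c k k') + (1 - u) * (\<Sum>k\<in>A. \<Sum>k'\<in>B. a2 k * b2 k' * c k k')
     - (\<Sum>k\<in>A. \<Sum>k'\<in>B. (u * a1 k + (1 - u) * a2 k) * (u * b1 k' + (1 - u) * b2 k') * c k k')
     = u * (1 - u) * (\<Sum>k\<in>A. \<Sum>k'\<in>B. (a1 k - a2 k) * (b1 k' - b2 k') * c k k')"
proof -
  have "?thesis \<longleftrightarrow> (\<Sum>k\<in>A. \<Sum>k'\<in>B. u * (a1 k * b1 k' * c k k') + (1 - u) * (a2 k * b2 k' * c k k')
      - (u * a1 k + (1 - u) * a2 k) * (u * b1 k' + (1 - u) * b2 k') * c k k')
     = (\<Sum>k\<in>A. \<Sum>k'\<in>B. u * (1 - u) * ((a1 k - a2 k) * (b1 k' - b2 k') * c k k'))"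
    by (simp add: sum_distrib_left sum.distrib sum_subtractf)
  moreover have "(\<Sum>k\<in>A. \<Sum>k'\<in>B. u * (a1 k * b1 k' * c k k') + (1 - u) * (a2 k * b2 k' * c k k')
      - (u * a1 k + (1 - u) * a2 k) * (u * b1 k' + (1 - u) * b2 k') * c k k')
     = (\<Sum>k\<in>A. \<Sum>k'\<in>B. u * (1 - u) * ((a1 k - a2 k) * (b1 k' - b2 k') * c k k'))"
    by (intro sum.cong refl) (simp add: algebra_simps)
  ultimately show ?thesis by blast
qed



lemma lin_helper: fixes B C E X Y :: real
  shows "- ((X + Y) / 2) \<le> B \<Longrightarrow> C = E - X - Y \<Longrightarrow> 1/2*C \<le> B + 1/2*E"
  by (simp add: field_simps)

lemma strict_part:
  fixes N T :: nat and K :: "nat \<Rightarrow> nat"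
    and X g0 S :: "nat \<Rightarrow> nat \<Rightarrow> real"
    and th :: "nat \<Rightarrow> nat \<Rightarrow> nat \<Rightarrow> real"
    and \<delta> \<epsilon> :: "nat \<Rightarrow> real"
  assumes N_pos: "1 \<le> N"
    and eps_pos: "\<forall>n\<in>{0..N+1}. 0 < \<epsilon> n"
    and gap: "Min (\<epsilon> ` {1..N+1}) >
       Max ((\<lambda>n. spec_norm (K (Suc n)) (K n) (Amat N th \<delta> n)
               + spec_norm (K (Suc (Suc n))) (K (Suc n)) (Amat N th \<delta> (Suc n))) ` {1..N})"
  shows "strictly_convex_on_set (EON_domain N K T) (EON_L N K T X g0 S th \<delta> \<epsilon>)"
  unfolding strictly_convex_on_set_def
proof (intro ballI allI impI, elim conjE)
  fix x y :: "nat \<Rightarrow> nat \<Rightarrow> nat \<Rightarrow> real" and u :: real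
  assume xD: "x \<in> EON_domain N K T" and yD: "y \<in> EON_domain N K T" and neq: "x \<noteq> y"
    and u0: "0 < u" and u1: "u < 1"
  define z where "z = (\<lambda>n k t. u * x n k t + (1 - u) * y n k t)"
  define dd where "dd = (\<lambda>n k t. x n k t - y n k t)"
  define Sd where "Sd = (\<lambda>n t. \<Sum>k<K n. (dd n k t)\<^sup>2)"
  define a where "a = (\<lambda>n. spec_norm (K (Suc n)) (K n) (Amat N th \<delta> n))"
  define Bn where "Bn = (\<lambda>n t. \<Sum>k<K n. \<Sum>k'<K (Suc n). dd n k t * dd (Suc n) k' t * Amat N th \<delta> n k' k)"
  define Lin where "Lin = (\<lambda>G t. \<Sum>k1<K 1. gam g0 G 1 k1 t * (\<Sum>d<K 0. g0 d t * (X t d - S d k1)\<^sup>2))"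
  define Cp where "Cp = (\<lambda>G t. \<Sum>n\<in>{1..N}. \<delta> n * (\<Sum>kn<K n. \<Sum>kn1<K (Suc n).
            gam g0 G n kn t * gam g0 G (Suc n) kn1 t * ln (th n kn kn1)))"
  define En where "En = (\<lambda>G t. \<Sum>n\<in>{0..N+1}. \<epsilon> n * (\<Sum>kn<K n. xlogx (gam g0 G n kn t)))"
  define Q where "Q = (\<lambda>t. (\<Sum>n\<in>{1..N}. Bn n t) + 1/2 * (\<Sum>n\<in>{1..N+1}. \<epsilon> n * Sd n t))"
  define b where "b = (\<lambda>n. if n \<le> N then a n else 0)"
  define b' where "b' = (\<lambda>n. if 2 \<le> n then a (n - 1) else 0)"
  define c where "c = (\<lambda>n. \<epsilon> n - b n - b' n)"
  have Leq: "\<And>G. EON_L N K T X g0 S th \<delta> \<epsilon> G = (\<Sum>t<T. Lin G t - Cp G t + En G t)"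
    by (simp add: EON_L_def Lin_def Cp_def En_def)
  have zD: "z \<in> EON_domain N K T" unfolding z_def using dom_convex[OF xD yD] u0 u1 by simp
  have Sd0: "\<And>n t. 0 \<le> Sd n t" unfolding Sd_def by (intro sum_nonneg) simp
  have a0: "\<And>n. 0 \<le> a n" unfolding a_def by (rule spec_norm_nonneg)

  have lin0: "u * Lin x t + (1 - u) * Lin y t - Lin z t = 0" for t
    unfolding Lin_def gap_sum by (intro sum.neutral ballI) (simp add: gam_def z_def algebra_simps)

  have cp: "u * Cp x t + (1 - u) * Cp y t - Cp z t = - (u * (1 - u)) * (\<Sum>n\<in>{1..N}. Bn n t)" for t
    unfolding Cp_def gap_sum sum_distrib_left[of "- (u * (1 - u))"]
  proof (intro sum.cong refl)
    fix n assume n: "n \<in> {1..N}"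
    have g: "\<And>G. gam g0 G n = G n" "\<And>G. gam g0 G (Suc n) = G (Suc n)" using n by (auto simp: gam_def)
    have "u * (\<delta> n * (\<Sum>kn<K n. \<Sum>kn1<K (Suc n). x n kn t * x (Suc n) kn1 t * ln (th n kn kn1)))
        + (1 - u) * (\<delta> n * (\<Sum>kn<K n. \<Sum>kn1<K (Suc n). y n kn t * y (Suc n) kn1 t * ln (th n kn kn1)))
        - \<delta> n * (\<Sum>kn<K n. \<Sum>kn1<K (Suc n). z n kn t * z (Suc n) kn1 t * ln (th n kn kn1))
      = \<delta> n * (u * (\<Sum>kn<K n. \<Sum>kn1<K (Suc n). x n kn t * x (Suc n) kn1 t * ln (th n kn kn1))
        + (1 - u) * (\<Sum>kn<K n. \<Sum>kn1<K (Suc n). y n kn t * y (Suc n) kn1 t * ln (th n kn kn1))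
        - (\<Sum>kn<K n. \<Sum>kn1<K (Suc n). z n kn t * z (Suc n) kn1 t * ln (th n kn kn1)))"
      by (simp add: algebra_simps)
    also have "\<dots> = \<delta> n * (u * (1 - u) * (\<Sum>kn<K n. \<Sum>kn1<K (Suc n). dd n kn t * dd (Suc n) kn1 t * ln (th n kn kn1)))"
      unfolding z_def dd_def by (subst bil_gap) (rule refl)
    also have "\<dots> = - (u * (1 - u)) * Bn n t"
      unfolding Bn_def Amat_def using n by (simp add: sum_distrib_left mult_ac)
    finally show "u * (\<delta> n * (\<Sum>kn<K n. \<Sum>kn1<K (Suc n). gam g0 x n kn t * gam g0 x (Suc n) kn1 t * ln (th n kn kn1)))
        + (1 - u) * (\<delta> n * (\<Sum>kn<K n. \<Sum>kn1<K (Suc n). gam g0 y n kn t * gam g0 y (Suc n) kn1 t * ln (th n kn kn1)))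
        - \<delta> n * (\<Sum>kn<K n. \<Sum>kn1<K (Suc n). gam g0 z n kn t * gam g0 z (Suc n) kn1 t * ln (th n kn kn1))
      = - (u * (1 - u)) * Bn n t" unfolding g .
  qed

  have en: "u * (1 - u) / 2 * (\<Sum>n\<in>{1..N+1}. \<epsilon> n * Sd n t) \<le> u * En x t + (1 - u) * En y t - En z t" for t
  proof -
    have "u * En x t + (1 - u) * En y t - En z t
       = (\<Sum>n\<in>{0..N+1}. u * (\<epsilon> n * (\<Sum>kn<K n. xlogx (gam g0 x n kn t)))
          + (1 - u) * (\<epsilon> n * (\<Sum>kn<K n. xlogx (gam g0 y n kn t)))
          - \<epsilon> n * (\<Sum>kn<K n. xlogx (gam g0 z n kn t)))"
      unfolding En_def gap_sum ..
    also have "\<dots> = (\<Sum>n\<in>{1..N+1}. u * (\<epsilon> n * (\<Sum>kn<K n. xlogx (gam g0 x n kn t)))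
          + (1 - u) * (\<epsilon> n * (\<Sum>kn<K n. xlogx (gam g0 y n kn t)))
          - \<epsilon> n * (\<Sum>kn<K n. xlogx (gam g0 z n kn t)))"
      by (subst sum.atLeast_Suc_atMost) (simp_all add: gam_def algebra_simps)
    finally have e1: "u * En x t + (1 - u) * En y t - En z t = \<dots>" .
    have "u * (1 - u) / 2 * (\<epsilon> n * Sd n t) \<le> u * (\<epsilon> n * (\<Sum>kn<K n. xlogx (gam g0 x n kn t)))
          + (1 - u) * (\<epsilon> n * (\<Sum>kn<K n. xlogx (gam g0 y n kn t)))
          - \<epsilon> n * (\<Sum>kn<K n. xlogx (gam g0 z n kn t))" if n: "n \<in> {1..N+1}" for n
    proof -
      have g: "\<And>G. gam g0 G n = G n" using n by (auto simp: gam_def)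
      have "n \<in> {0..N+1}" using n by auto
      hence "0 < \<epsilon> n" using eps_pos by blast
      hence ep: "0 \<le> \<epsilon> n" by simp
      have "(\<Sum>kn<K n. u * (1 - u) * (dd n kn t)\<^sup>2 / 2) \<le> (\<Sum>kn<K n. u * xlogx (x n kn t) + (1 - u) * xlogx (y n kn t) - xlogx (z n kn t))"
        unfolding z_def dd_def
        by (intro sum_mono xlogx_gap) (use dom_bounds[OF xD] dom_bounds[OF yD] u0 u1 in auto)
      hence "\<epsilon> n * (\<Sum>kn<K n. u * (1 - u) * (dd n kn t)\<^sup>2 / 2) \<le> \<epsilon> n * (\<Sum>kn<K n. u * xlogx (x n kn t) + (1 - u) * xlogx (y n kn t) - xlogx (z n kn t))"
        using ep by (rule mult_left_mono)
      moreover have "\<epsilon> n * (\<Sum>kn<K n. u * (1 - u) * (dd n kn t)\<^sup>2 / 2) = u * (1 - u) / 2 * (\<epsilon> n * Sd n t)"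
        unfolding Sd_def by (simp add: sum_distrib_left sum_divide_distrib mult_ac)
      moreover have "\<epsilon> n * (\<Sum>kn<K n. u * xlogx (x n kn t) + (1 - u) * xlogx (y n kn t) - xlogx (z n kn t))
          = u * (\<epsilon> n * (\<Sum>kn<K n. xlogx (x n kn t))) + (1 - u) * (\<epsilon> n * (\<Sum>kn<K n. xlogx (y n kn t)))
          - \<epsilon> n * (\<Sum>kn<K n. xlogx (z n kn t))"
        unfolding gap_sum[symmetric] by (simp add: algebra_simps)
      ultimately show ?thesis unfolding g by simp
    qed
    hence "(\<Sum>n\<in>{1..N+1}. u * (1 - u) / 2 * (\<epsilon> n * Sd n t)) \<le> (\<Sum>n\<in>{1..N+1}. u * (\<epsilon> n * (\<Sum>kn<K n. xlogx (gam g0 x n kn t)))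
          + (1 - u) * (\<epsilon> n * (\<Sum>kn<K n. xlogx (gam g0 y n kn t)))
          - \<epsilon> n * (\<Sum>kn<K n. xlogx (gam g0 z n kn t)))"
      by (rule sum_mono)
    thus ?thesis unfolding e1 sum_distrib_left[symmetric] .
  qed

  have gapt: "u * (1 - u) * Q t \<le> u * (Lin x t - Cp x t + En x t) + (1 - u) * (Lin y t - Cp y t + En y t)
      - (Lin z t - Cp z t + En z t)" for t
  proof -
    have "u * (Lin x t - Cp x t + En x t) + (1 - u) * (Lin y t - Cp y t + En y t) - (Lin z t - Cp z t + En z t)
      = (u * Lin x t + (1 - u) * Lin y t - Lin z t) - (u * Cp x t + (1 - u) * Cp y t - Cp z t)
        + (u * En x t + (1 - u) * En y t - En z t)" by (simp add: algebra_simps)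
    also have "\<dots> = u * (1 - u) * (\<Sum>n\<in>{1..N}. Bn n t) + (u * En x t + (1 - u) * En y t - En z t)"
      using lin0[of t] cp[of t] by simp
    finally show ?thesis using en[of t] unfolding Q_def by (simp add: algebra_simps)
  qed

  have key: "a j + a (Suc j) < \<epsilon> n" if j: "j \<in> {1..N}" and n: "n \<in> {1..N+1}" for j n
  proof -
    have "a j + a (Suc j) \<le> Max ((\<lambda>n. spec_norm (K (Suc n)) (K n) (Amat N th \<delta> n)
               + spec_norm (K (Suc (Suc n))) (K (Suc n)) (Amat N th \<delta> (Suc n))) ` {1..N})"
      unfolding a_def by (rule Max_ge) (use j in auto)
    moreover have "Min (\<epsilon> ` {1..N+1}) \<le> \<epsilon> n" by (rule Min_le) (use n in auto)
    ultimately show ?thesis using gap by linarith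
  qed
  have cpos: "0 < c n" if n: "n \<in> {1..N+1}" for n
  proof (cases "n \<le> N")
    case True
    show ?thesis
    proof (cases "2 \<le> n")
      case True2: True
      have "a (n - 1) + a (Suc (n - 1)) < \<epsilon> n" by (rule key) (use n True True2 in auto)
      moreover have "Suc (n - 1) = n" using True2 by simp
      ultimately show ?thesis unfolding c_def b_def b'_def using True True2 by simp
    next
      case False
      hence "n = 1" using n by auto
      moreover have "a 1 + a (Suc 1) < \<epsilon> 1" by (rule key) (use N_pos in auto)
      ultimately show ?thesis unfolding c_def b_def b'_def using a0[of "Suc (Suc 0)"] N_pos by simp
    qed
  next
    case False
    hence nN: "n = Suc N" using n by auto
    have "a N + a (Suc N) < \<epsilon> n" by (rule key) (use N_pos n in auto)
    thus ?thesis unfolding c_def b_def b'_def nN using a0[of "Suc N"] N_pos by simp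
  qed

  have Qlow: "1/2 * (\<Sum>n\<in>{1..N+1}. c n * Sd n t) \<le> Q t" for t
  proof -
    have bb: "- (a n * (Sd n t + Sd (Suc n) t) / 2) \<le> Bn n t" for n
      unfolding a_def Sd_def Bn_def
      by (rule bil_bound[where q="K (Suc n)" and p="K n" and A="Amat N th \<delta> n"
            and d="\<lambda>k. dd n k t" and e="\<lambda>k. dd (Suc n) k t"])
    have h0: "(\<Sum>n\<in>{1..N}. - (a n * (Sd n t + Sd (Suc n) t) / 2)) \<le> (\<Sum>n\<in>{1..N}. Bn n t)"
      by (rule sum_mono) (rule bb)
    have h1:  "(\<Sum>n\<in>{1..N}. - (a n * (Sd n t + Sd (Suc n) t) / 2))
        = - (((\<Sum>n\<in>{1..N}. a n * Sd n t) + (\<Sum>n\<in>{1..N}. a n * Sd (Suc n) t)) / 2)"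
      unfolding sum.distrib[symmetric] sum_divide_distrib sum_negf[symmetric]
      by (intro sum.cong refl) (simp add: algebra_simps)
    have sb: "(\<Sum>n\<in>{1..N+1}. b n * Sd n t) = (\<Sum>n\<in>{1..N}. a n * Sd n t)"
    proof -
      have "(\<Sum>n\<in>{1..Suc N}. b n * Sd n t) = (\<Sum>n\<in>{1..N}. b n * Sd n t) + b (Suc N) * Sd (Suc N) t"
        by simp
      also have "\<dots> = (\<Sum>n\<in>{1..N}. a n * Sd n t)"
        by (auto simp: b_def intro!: sum.cong)
      finally show ?thesis by simp
    qed
    have sb': "(\<Sum>n\<in>{1..N+1}. b' n * Sd n t) = (\<Sum>n\<in>{1..N}. a n * Sd (Suc n) t)"
    proof -
      have "(\<Sum>n\<in>{1..N+1}. b' n * Sd n t) = b' 1 * Sd 1 t + (\<Sum>n\<in>{Suc 1..Suc N}. b' n * Sd n t)"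
        using N_pos by (subst sum.atLeast_Suc_atMost) auto
      also have "\<dots> = (\<Sum>n\<in>{1..N}. b' (Suc n) * Sd (Suc n) t)"
        unfolding sum.shift_bounds_cl_Suc_ivl by (simp add: b'_def)
      also have "\<dots> = (\<Sum>n\<in>{1..N}. a n * Sd (Suc n) t)"
        by (intro sum.cong refl) (auto simp: b'_def)
      finally show ?thesis .
    qed
    have h2: "(\<Sum>n\<in>{1..N+1}. c n * Sd n t) = (\<Sum>n\<in>{1..N+1}. \<epsilon> n * Sd n t)
        - (\<Sum>n\<in>{1..N+1}. b n * Sd n t) - (\<Sum>n\<in>{1..N+1}. b' n * Sd n t)"
      by (simp only: c_def left_diff_distrib sum_subtractf)
    have h3: "- (((\<Sum>n\<in>{1..N}. a n * Sd n t) + (\<Sum>n\<in>{1..N}. a n * Sd (Suc n) t)) / 2) \<le> (\<Sum>n\<in>{1..N}. Bn n t)"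
      using h0 h1 by simp
    show ?thesis unfolding Q_def
      by (rule lin_helper[OF h3]) (use h2 sb sb' in simp)
  qed

  obtain n0 k0 t0 where ne: "x n0 k0 t0 \<noteq> y n0 k0 t0" using neq by (auto simp: fun_eq_iff)
  have out: "x n k t = 0 \<and> y n k t = 0" if "\<not> (n \<in> {1..N+1} \<and> k < K n \<and> t < T)" for n k t
  proof -
    have "n \<notin> {1..N+1} \<or> K n \<le> k \<or> T \<le> t" using that by auto
    thus ?thesis using xD yD unfolding EON_domain_def by blast
  qed
  have all0: "n0 \<in> {1..N+1} \<and> k0 < K n0 \<and> t0 < T"
  proof (rule ccontr)
    assume "\<not> (n0 \<in> {1..N+1} \<and> k0 < K n0 \<and> t0 < T)"
    hence "x n0 k0 t0 = 0 \<and> y n0 k0 t0 = 0" by (rule out)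
    with ne show False by simp
  qed
  hence n0: "n0 \<in> {1..N+1}" and k0: "k0 < K n0" and t0: "t0 < T" by auto
  have Sdpos: "0 < Sd n0 t0"
    unfolding Sd_def by (rule sum_pos2[of _ k0]) (use k0 ne in \<open>auto simp: dd_def\<close>)
  have cnn: "0 \<le> c n" if "n \<in> {1..N+1}" for n using cpos[OF that] by simp
  have cS0: "0 \<le> (\<Sum>n\<in>{1..N+1}. c n * Sd n t)" for t
    by (intro sum_nonneg mult_nonneg_nonneg cnn Sd0)
  have Q0: "0 \<le> Q t" for t
    by (rule order_trans[OF _ Qlow]) (use cS0[of t] in simp)
  have "0 < (\<Sum>n\<in>{1..N+1}. c n * Sd n t0)"
  proof (rule sum_pos2[of _ n0])
    show "0 < c n0 * Sd n0 t0" using cpos[OF n0] Sdpos by simp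
    show "\<And>i. i \<in> {1..N+1} \<Longrightarrow> 0 \<le> c i * Sd i t0" by (intro mult_nonneg_nonneg cnn Sd0)
  qed (use n0 in auto)
  hence Qt0: "0 < Q t0" by (intro less_le_trans[OF _ Qlow]) simp
  have Qsum: "0 < (\<Sum>t<T. Q t)" by (rule sum_pos2[of _ t0]) (use t0 Qt0 Q0 in auto)

  have "u * (1 - u) * (\<Sum>t<T. Q t) \<le> u * EON_L N K T X g0 S th \<delta> \<epsilon> x + (1 - u) * EON_L N K T X g0 S th \<delta> \<epsilon> y
       - EON_L N K T X g0 S th \<delta> \<epsilon> z"
    unfolding Leq gap_sum sum_distrib_left[of "u * (1 - u)"] by (rule sum_mono) (rule gapt)
  moreover have "0 < u * (1 - u) * (\<Sum>t<T. Q t)" using u0 u1 Qsum by simp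
  ultimately show "EON_L N K T X g0 S th \<delta> \<epsilon> (\<lambda>n k t. u * x n k t + (1 - u) * y n k t)
      < u * EON_L N K T X g0 S th \<delta> \<epsilon> x + (1 - u) * EON_L N K T X g0 S th \<delta> \<epsilon> y"
    unfolding z_def by linarith
qed



lemma dom_alt:
  "EON_domain N K T = {G. \<forall>n k t. (if n \<in> {1..N+1} \<and> t < T
      then (if k < K n then 0 \<le> G n k t else G n k t = 0) \<and> (\<Sum>k<K n. G n k t) = 1
      else G n k t = 0)}"
proof (rule set_eqI, rule iffI)
  fix G :: "nat \<Rightarrow> nat \<Rightarrow> nat \<Rightarrow> real" assume G: "G \<in> EON_domain N K T"
  show "G \<in> {G. \<forall>n k t. (if n \<in> {1..N+1} \<and> t < T
      then (if k < K n then 0 \<le> G n k t else G n k t = 0) \<and> (\<Sum>k<K n. G n k t) = 1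
      else G n k t = 0)}"
  proof (intro CollectI allI)
    fix n k t
    have A: "\<forall>n\<in>{1..N+1}. \<forall>t<T. (\<forall>k<K n. 0 \<le> G n k t) \<and> (\<Sum>k<K n. G n k t) = 1"
      and B: "\<forall>n k t. (n \<notin> {1..N+1} \<or> K n \<le> k \<or> T \<le> t) \<longrightarrow> G n k t = 0"
      using G unfolding EON_domain_def by auto
    show "(if n \<in> {1..N+1} \<and> t < T
      then (if k < K n then 0 \<le> G n k t else G n k t = 0) \<and> (\<Sum>k<K n. G n k t) = 1
      else G n k t = 0)"
    proof (cases "n \<in> {1..N+1} \<and> t < T")
      case True
      thus ?thesis using A B by (simp add: not_less)
    next
      case False
      thus ?thesis using B by (auto simp: not_less)
    qed
  qed
next
  fix G :: "nat \<Rightarrow> nat \<Rightarrow> nat \<Rightarrow> real" assume G: "G \<in> {G. \<forall>n k t. (if n \<in> {1..N+1} \<and> t < T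
      then (if k < K n then 0 \<le> G n k t else G n k t = 0) \<and> (\<Sum>k<K n. G n k t) = 1
      else G n k t = 0)}"
  hence H: "\<And>n k t. (if n \<in> {1..N+1} \<and> t < T
      then (if k < K n then 0 \<le> G n k t else G n k t = 0) \<and> (\<Sum>k<K n. G n k t) = 1
      else G n k t = 0)" by blast
  have A: "\<forall>n\<in>{1..N+1}. \<forall>t<T. (\<forall>k<K n. 0 \<le> G n k t) \<and> (\<Sum>k<K n. G n k t) = 1"
  proof (intro ballI allI impI conjI)
    fix n t k assume "n \<in> {1..N+1}" "t < T" "k < K n"
    thus "0 \<le> G n k t" using H[of n t k] by simp
  next
    fix n t assume "n \<in> {1..N+1}" "t < T"
    thus "(\<Sum>k<K n. G n k t) = 1" using H[of n t 0] by simp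
  qed
  have B: "\<forall>n k t. (n \<notin> {1..N+1} \<or> K n \<le> k \<or> T \<le> t) \<longrightarrow> G n k t = 0"
  proof (intro allI impI)
    fix n k t assume c: "n \<notin> {1..N+1} \<or> K n \<le> k \<or> T \<le> t"
    show "G n k t = 0"
    proof (cases "n \<in> {1..N+1} \<and> t < T")
      case True
      hence "K n \<le> k" using c by auto
      thus ?thesis using H[of n t k] True by simp
    next
      case False
      thus ?thesis using H[of n t k] by simp
    qed
  qed
  show "G \<in> EON_domain N K T" unfolding EON_domain_def using A B by blast
qed

lemma dom_closed: "closed (EON_domain N K T)"
  unfolding dom_alt
proof (intro closed_Collect_all)
  fix n k t
  show "closed {G::nat \<Rightarrow> nat \<Rightarrow> nat \<Rightarrow> real. (if n \<in> {1..N+1} \<and> t < T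
      then (if k < K n then 0 \<le> G n k t else G n k t = 0) \<and> (\<Sum>k<K n. G n k t) = 1
      else G n k t = 0)}"
  proof (cases "n \<in> {1..N+1} \<and> t < T")
    case True
    have s: "closed {G::nat \<Rightarrow> nat \<Rightarrow> nat \<Rightarrow> real. (\<Sum>k<K n. G n k t) = 1}"
      by (intro closed_Collect_eq continuous_on_sum eval3_cont continuous_on_const)
    show ?thesis
    proof (cases "k < K n")
      case True2: True
      have "closed {G::nat \<Rightarrow> nat \<Rightarrow> nat \<Rightarrow> real. 0 \<le> G n k t \<and> (\<Sum>k<K n. G n k t) = 1}"
        by (intro closed_Collect_conj s closed_Collect_le eval3_cont continuous_on_const)
      thus ?thesis unfolding if_P[OF True] if_P[OF True2] .
    next
      case False
      have "closed {G::nat \<Rightarrow> nat \<Rightarrow> nat \<Rightarrow> real. G n k t = 0 \<and> (\<Sum>k<K n. G n k t) = 1}"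
        by (intro closed_Collect_conj s closed_Collect_eq eval3_cont continuous_on_const)
      thus ?thesis unfolding if_P[OF True] if_not_P[OF False] .
    qed
  next
    case False
    have "closed {G::nat \<Rightarrow> nat \<Rightarrow> nat \<Rightarrow> real. G n k t = 0}"
      by (intro closed_Collect_eq eval3_cont continuous_on_const)
    thus ?thesis unfolding if_not_P[OF False] .
  qed
qed

lemma dom_compact: "compact (EON_domain N K T)"
proof -
  have "compact ({G::nat \<Rightarrow> nat \<Rightarrow> nat \<Rightarrow> real. \<forall>n k t. G n k t \<in> {0..1}} \<inter> EON_domain N K T)"
    by (intro compact_Int_closed box_compact dom_closed)
  moreover have "{G::nat \<Rightarrow> nat \<Rightarrow> nat \<Rightarrow> real. \<forall>n k t. G n k t \<in> {0..1}} \<inter> EON_domain N K T = EON_domain N K T"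
    using dom_bounds by fastforce
  ultimately show ?thesis by simp
qed

lemma dom_nonempty:
  assumes "\<forall>n\<in>{0..N+1}. 0 < K n"
  shows "EON_domain N K T \<noteq> {}"
proof -
  define G0 where "G0 = (\<lambda>n (k::nat) t. if n \<in> {1..N+1} \<and> k = 0 \<and> t < T then 1 else (0::real))"
  have "G0 \<in> EON_domain N K T"
    unfolding EON_domain_def
  proof (intro CollectI conjI)
    show "\<forall>n\<in>{1..N+1}. \<forall>t<T. (\<forall>k<K n. 0 \<le> G0 n k t) \<and> (\<Sum>k<K n. G0 n k t) = 1"
    proof (intro ballI allI impI conjI)
      fix n t k show "0 \<le> G0 n k t" unfolding G0_def by simp
    next
      fix n t assume n: "n \<in> {1..N+1}" and t: "t < T"
      have "0 < K n" using assms n by auto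
      thus "(\<Sum>k<K n. G0 n k t) = 1" using n t unfolding G0_def by (simp add: sum.delta)
    qed
    show "\<forall>n k t. (n \<notin> {1..N+1} \<or> K n \<le> k \<or> T \<le> t) \<longrightarrow> G0 n k t = 0"
      unfolding G0_def using assms by auto
  qed
  thus ?thesis by blast
qed

lemma L_cont: "continuous_on (EON_domain N K T) (EON_L N K T X g0 S th \<delta> \<epsilon>)"
proof -
  have evc: "\<And>n k t. continuous_on (EON_domain N K T) (\<lambda>G. gam g0 G n k t)"
    by (case_tac "n = 0") (simp_all add: gam_def eval3_cont)
  have xc: "\<And>n k t. continuous_on (EON_domain N K T) (\<lambda>G. xlogx (gam g0 G n k t))"
  proof -
    fix n k t
    show "continuous_on (EON_domain N K T) (\<lambda>G. xlogx (gam g0 G n k t))"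
    proof (cases "n = 0")
      case True thus ?thesis by (simp add: gam_def)
    next
      case False
      have "continuous_on (EON_domain N K T) (\<lambda>G. xlogx (G n k t))"
        by (rule continuous_on_compose2[OF xlogx_cont eval3_cont]) (use dom_bounds in auto)
      thus ?thesis using False by (simp add: gam_def)
    qed
  qed
  show ?thesis unfolding EON_L_def[abs_def]
    by (intro continuous_on_sum continuous_on_add continuous_on_diff continuous_on_mult
        continuous_on_const evc xc)
qed


theorem lemma7:
  fixes N T :: nat and K :: "nat \<Rightarrow> nat"
    and X g0 S :: "nat \<Rightarrow> nat \<Rightarrow> real"
    and th :: "nat \<Rightarrow> nat \<Rightarrow> nat \<Rightarrow> real"
    and \<delta> \<epsilon> :: "nat \<Rightarrow> real"
  assumes N_pos: "1 \<le> N"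
    and K_pos: "\<forall>n\<in>{0..N+1}. 0 < K n"
    and g0_nonneg: "\<forall>d<K 0. \<forall>t<T. 0 \<le> g0 d t"
    and delta_pos: "\<forall>n\<in>{1..N}. 0 < \<delta> n"
    and eps_pos: "\<forall>n\<in>{0..N+1}. 0 < \<epsilon> n"
    and th_pos: "\<forall>n\<in>{1..N}. \<forall>k<K n. \<forall>k'<K (Suc n). 0 < th n k k'"
    and th_col: "\<forall>n\<in>{1..N}. \<forall>k'<K (Suc n). (\<Sum>k<K n. th n k k') = 1"
    and gap: "Min (\<epsilon> ` {1..N+1}) >
       Max ((\<lambda>n. spec_norm (K (Suc n)) (K n) (Amat N th \<delta> n)
               + spec_norm (K (Suc (Suc n))) (K (Suc n)) (Amat N th \<delta> (Suc n))) ` {1..N})"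
  shows "strictly_convex_on_set (EON_domain N K T) (EON_L N K T X g0 S th \<delta> \<epsilon>)
     \<and> (\<exists>!G. G \<in> EON_domain N K T \<and>
          (\<forall>G'\<in>EON_domain N K T. EON_L N K T X g0 S th \<delta> \<epsilon> G \<le> EON_L N K T X g0 S th \<delta> \<epsilon> G'))"
proof -
  let ?D = "EON_domain N K T" and ?L = "EON_L N K T X g0 S th \<delta> \<epsilon>"
  have sc: "strictly_convex_on_set ?D ?L" by (rule strict_part[OF N_pos eps_pos gap])
  obtain G where GD: "G \<in> ?D" and Gmin: "\<forall>G'\<in>?D. ?L G \<le> ?L G'"
    using continuous_attains_inf[OF dom_compact dom_nonempty[OF K_pos] L_cont] by blast
  have uniq: "G1 = G2" if G1: "G1 \<in> ?D" "\<forall>G'\<in>?D. ?L G1 \<le> ?L G'"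
    and G2: "G2 \<in> ?D" "\<forall>G'\<in>?D. ?L G2 \<le> ?L G'" for G1 G2
  proof (rule ccontr)
    assume ne: "G1 \<noteq> G2"
    define z where "z = (\<lambda>n k t. (1/2::real) * G1 n k t + (1 - 1/2) * G2 n k t)"
    have zD: "z \<in> ?D" unfolding z_def by (rule dom_convex[OF G1(1) G2(1)]) auto
    have sc': "\<And>x y u. x \<in> ?D \<Longrightarrow> y \<in> ?D \<Longrightarrow> x \<noteq> y \<Longrightarrow> 0 < u \<Longrightarrow> u < 1 \<Longrightarrow>
       ?L (\<lambda>n k t. u * x n k t + (1 - u) * y n k t) < u * ?L x + (1 - u) * ?L y"
      using sc unfolding strictly_convex_on_set_def by blast
    have "?L z < 1/2 * ?L G1 + (1 - 1/2) * ?L G2"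
      unfolding z_def by (rule sc'[OF G1(1) G2(1) ne]) simp_all
    moreover have "?L G1 \<le> ?L z" "?L G2 \<le> ?L z" using G1(2) G2(2) zD by auto
    ultimately show False by (simp add: field_simps)
  qed
  show ?thesis
  proof (rule conjI[OF sc])
    show "\<exists>!G. G \<in> ?D \<and> (\<forall>G'\<in>?D. ?L G \<le> ?L G')"
    proof (rule ex1I[of _ G])
      show "G \<in> ?D \<and> (\<forall>G'\<in>?D. ?L G \<le> ?L G')" using GD Gmin by blast
      fix G' assume G': "G' \<in> ?D \<and> (\<forall>G''\<in>?D. ?L G' \<le> ?L G'')"
      show "G' = G" by (rule uniq) (use G' GD Gmin in auto)
    qed
  qed
qed


end
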